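(* Let $\mathcal T$ be a closed triangulated surface with $V(\mathcal T)\leq 11$ and let $(\mathcal G,\mathcal D,\{\mathcal D_1,\ldots,\mathcal D_n\})$ be a decomposition of $\mathcal T$. Then the boundary of $\mathcal G$ has exactly $1$ or $2$ connected components.
   Context: A triangulated surface is a finite simplicial complex whose underlying space is a connected compact surface; it is closed if the surface has empty boundary; $V(\cdot)$ is the number of vertices. The valence of a vertex is the number of triangles containing it. A decomposition of a closed triangulated surface $\mathcal T$ is a triple $(\mathcal G,\mathcal D,\{\mathcal D_1,\ldots,\mathcal D_n\})$, $n\geq0$, of sub-triangulations (subcomplexes which are triangulated surfaces) of $\mathcal T$ such that $\mathcal D,\mathcal D_1,\ldots,\mathcal D_n$ are triangulated discs, the interior of $\mathcal D$ contains a vertex of maximal valence in $\mathcal T$, $\mathcal G\cup\mathcal D\cup\mathcal D_1\cup\dots\cup\mathcal D_n=\mathcal T$, and any two of them intersect in a triangulated circle or not at all. *)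

theory Defs
  imports Main
begin

text \<open>A (pure 2-dimensional) finite simplicial complex is represented by its set of
  triangles (3-element vertex sets). Its simplices are all nonempty subsets of triangles.\<close>

definition verts :: "'a set set \<Rightarrow> 'a set" where
  "verts K = \<Union>K"

definition faces :: "'a set set \<Rightarrow> 'a set set" where
  "faces K = {s. s \<noteq> {} \<and> (\<exists>t\<in>K. s \<subseteq> t)}"

definition edges :: "'a set set \<Rightarrow> 'a set set" where
  "edges K = {e. card e = 2 \<and> (\<exists>t\<in>K. e \<subseteq> t)}"

definition tri_count :: "'a set set \<Rightarrow> 'a set \<Rightarrow> nat" where
  "tri_count K e = card {t\<in>K. e \<subseteq> t}"

definition graph_connected :: "'a set set \<Rightarrow> bool" where
  "graph_connected E = (\<forall>a\<in>\<Union>E. \<forall>b\<in>\<Union>E. (\<lambda>x y. {x, y} \<in> E)\<^sup>*\<^sup>* a b)"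

definition cx_connected :: "'a set set \<Rightarrow> bool" where
  "cx_connected K = graph_connected (edges K)"

definition link :: "'a set set \<Rightarrow> 'a \<Rightarrow> 'a set set" where
  "link K v = {t - {v} | t. t \<in> K \<and> v \<in> t}"

text \<open>Triangulated (compact, connected) surface, possibly with boundary: every edge lies
  in one or two triangles and every vertex link is connected (hence a path or a cycle).\<close>
definition is_surface :: "'a set set \<Rightarrow> bool" where
  "is_surface K \<longleftrightarrow> finite K \<and> K \<noteq> {} \<and> (\<forall>t\<in>K. card t = 3)
     \<and> (\<forall>e\<in>edges K. tri_count K e = 1 \<or> tri_count K e = 2)
     \<and> (\<forall>v\<in>verts K. graph_connected (link K v))
     \<and> cx_connected K"

definition closed_surface :: "'a set set \<Rightarrow> bool" where
  "closed_surface K \<longleftrightarrow> is_surface K \<and> (\<forall>e\<in>edges K. tri_count K e = 2)"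

definition bd_edges :: "'a set set \<Rightarrow> 'a set set" where
  "bd_edges K = {e\<in>edges K. tri_count K e = 1}"

definition bd_verts :: "'a set set \<Rightarrow> 'a set" where
  "bd_verts K = \<Union>(bd_edges K)"

definition bd_components :: "'a set set \<Rightarrow> 'a set set" where
  "bd_components K = bd_verts K // {(a, b). (\<lambda>x y. {x, y} \<in> bd_edges K)\<^sup>*\<^sup>* a b}"

definition euler :: "'a set set \<Rightarrow> int" where
  "euler K = int (card (verts K)) - int (card (edges K)) + int (card K)"

text \<open>Triangulated disc: a triangulated surface with nonempty connected boundary and
  Euler characteristic 1 (by the classification of compact surfaces, exactly the discs).\<close>
definition is_disc :: "'a set set \<Rightarrow> bool" where
  "is_disc K \<longleftrightarrow> is_surface K \<and> bd_edges K \<noteq> {} \<and> card (bd_components K) = 1 \<and> euler K = 1"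

text \<open>Triangulated circle, given as a set of simplices (vertices and edges).\<close>
definition is_circle_cx :: "'a set set \<Rightarrow> bool" where
  "is_circle_cx S \<longleftrightarrow> (let E = {s\<in>S. card s = 2} in
      finite S \<and> E \<noteq> {} \<and> S = faces E
      \<and> (\<forall>v\<in>\<Union>E. card {e\<in>E. v \<in> e} = 2)
      \<and> graph_connected E)"

definition meet_ok :: "'a set set \<Rightarrow> 'a set set \<Rightarrow> bool" where
  "meet_ok A B \<longleftrightarrow> faces A \<inter> faces B = {} \<or> is_circle_cx (faces A \<inter> faces B)"

definition valence :: "'a set set \<Rightarrow> 'a \<Rightarrow> nat" where
  "valence K v = card {t\<in>K. v \<in> t}"

definition decomposition :: "'a set set \<Rightarrow> 'a set set \<Rightarrow> 'a set set \<Rightarrow> 'a set set list \<Rightarrow> bool" where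
  "decomposition T G D Ds \<longleftrightarrow>
     is_surface G \<and> G \<subseteq> T \<and> is_disc D \<and> D \<subseteq> T
     \<and> (\<forall>X\<in>set Ds. is_disc X \<and> X \<subseteq> T)
     \<and> (\<exists>v\<in>verts D - bd_verts D. \<forall>w\<in>verts T. valence T w \<le> valence T v)
     \<and> G \<union> D \<union> \<Union>(set Ds) = T
     \<and> meet_ok G D
     \<and> (\<forall>X\<in>set Ds. meet_ok G X \<and> meet_ok D X)
     \<and> (\<forall>i<length Ds. \<forall>j<length Ds. i \<noteq> j \<longrightarrow> meet_ok (Ds ! i) (Ds ! j))"

end

theory Submission
  imports Defs
begin


definition nbrs :: "'a set set \<Rightarrow> 'a \<Rightarrow> 'a set" where
  "nbrs T u = {x. x \<noteq> u \<and> (\<exists>t\<in>T. u \<in> t \<and> x \<in> t)}"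

lemma card3_split:
  assumes "card t = 3" "u \<in> t"
  shows "\<exists>a b. t = {u,a,b} \<and> a \<noteq> b \<and> a \<noteq> u \<and> b \<noteq> u"
proof -
  have "card (t - {u}) = 2" using assms by (simp add: card_Diff_singleton)
  then obtain a b where ab: "t - {u} = {a,b}" "a \<noteq> b" by (meson card_2_iff)
  then have "t = {u,a,b}" using assms(2) by blast
  then show ?thesis using ab by blast
qed

lemma tri_distinct:
  assumes "card {x,y,z} = 3" shows "x \<noteq> y \<and> x \<noteq> z \<and> y \<noteq> z"
proof -
  have "card {x,y,z} \<le> 2" if "x = y \<or> x = z \<or> y = z"
    using that by (auto intro: order.trans[OF card_insert_le_m1] simp: card_insert_if)
  then show ?thesis using assms by linarith
qed

lemma closed_facts:
  assumes "closed_surface T"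
  shows "finite T" "\<And>t. t \<in> T \<Longrightarrow> card t = 3"
    "\<And>e. e \<in> edges T \<Longrightarrow> tri_count T e = 2"
    "\<And>v. v \<in> verts T \<Longrightarrow> graph_connected (link T v)" "cx_connected T"
  using assms unfolding closed_surface_def is_surface_def by auto

lemma two_tris:
  assumes "closed_surface T" "{u,a,b} \<in> T"
  shows "card {t\<in>T. {u,a} \<subseteq> t} = 2"
proof -
  have c: "card {u,a,b} = 3" using closed_facts(2)[OF assms(1) assms(2)] .
  then have "u \<noteq> a" using tri_distinct[OF c] by blast
  then have "card {u,a} = 2" by simp
  moreover have "{u,a} \<subseteq> {u,a,b}" by blast
  ultimately have "{u,a} \<in> edges T" unfolding edges_def using assms(2) by blast
  then have "tri_count T {u,a} = 2" using closed_facts(3)[OF assms(1)] by blast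
  then show ?thesis unfolding tri_count_def .
qed

lemma third:
  assumes "closed_surface T" "{u,a,b} \<in> T" "{u,a,c} \<in> T" "b \<noteq> c" "{u,a,y} \<in> T"
  shows "y = b \<or> y = c"
proof -
  have cb: "card {u,a,b} = 3" "card {u,a,c} = 3" "card {u,a,y} = 3"
    using closed_facts(2)[OF assms(1)] assms by auto
  have d: "u \<noteq> a \<and> u \<noteq> b \<and> a \<noteq> b" "u \<noteq> a \<and> u \<noteq> c \<and> a \<noteq> c"
    "u \<noteq> a \<and> u \<noteq> y \<and> a \<noteq> y"
    using tri_distinct[OF cb(1)] tri_distinct[OF cb(2)] tri_distinct[OF cb(3)] by blast+
  have ne: "{u,a,b} \<noteq> {u,a,c}" using d assms(4) by (auto simp: insert_eq_iff doubleton_eq_iff)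
  have "card {t\<in>T. {u,a} \<subseteq> t} = 2" using two_tris[OF assms(1,2)] .
  then obtain p q where pq: "{t\<in>T. {u,a} \<subseteq> t} = {p,q}" by (meson card_2_iff)
  have "{u,a,b} \<in> {p,q}" "{u,a,c} \<in> {p,q}" "{u,a,y} \<in> {p,q}" using assms pq[symmetric] by auto
  then have "{u,a,y} = {u,a,b} \<or> {u,a,y} = {u,a,c}" using ne by auto
  then show ?thesis using d by (auto simp: insert_eq_iff)
qed

lemma exother:
  assumes "closed_surface T" "{u,a,b} \<in> T"
  shows "\<exists>c. {u,a,c} \<in> T \<and> c \<noteq> b"
proof -
  have "card {t\<in>T. {u,a} \<subseteq> t} = 2" using two_tris[OF assms] .
  then obtain p q where pq: "{t\<in>T. {u,a} \<subseteq> t} = {p,q}" "p \<noteq> q" by (meson card_2_iff)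
  then obtain t where t: "t \<in> T" "{u,a} \<subseteq> t" "t \<noteq> {u,a,b}" by blast
  have ct: "card t = 3" using closed_facts(2)[OF assms(1) t(1)] .
  have c: "card {u,a,b} = 3" using closed_facts(2)[OF assms] .
  then have d: "u \<noteq> a" using tri_distinct[OF c] by blast
  have "card (t - {u,a}) = 1" using ct t(2) d by (simp add: card_Diff_subset)
  then obtain c where "t - {u,a} = {c}" by (auto simp: card_1_singleton_iff)
  then have tc: "t = {u,a,c}" using t(2) by blast
  then show ?thesis using t by auto
qed



lemma link_mem: "X \<in> link K v \<longleftrightarrow> (\<exists>t. X = t - {v} \<and> t \<in> K \<and> v \<in> t)"
  unfolding link_def by blast

lemma clos:
  assumes T: "closed_surface T" and c0: "c0 \<in> C"
    and H: "\<forall>c\<in>C. \<exists>p\<in>C. \<exists>q\<in>C. p \<noteq> q \<and> {u,c,p} \<in> T \<and> {u,c,q} \<in> T"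
  shows "nbrs T u = C"
proof
  show "C \<subseteq> nbrs T u"
  proof
    fix c assume "c \<in> C"
    then obtain p where p: "{u,c,p} \<in> T" using H by blast
    then have cc: "card {u,c,p} = 3" using closed_facts(2)[OF T] by blast
    then have "c \<noteq> u" using tri_distinct[OF cc] by blast
    then show "c \<in> nbrs T u" unfolding nbrs_def using p by blast
  qed
next
  obtain p where p: "{u,c0,p} \<in> T" using H c0 by blast
  have cp: "card {u,c0,p} = 3" using closed_facts(2)[OF T p] .
  have uv: "u \<in> verts T" unfolding verts_def using p by blast
  have gc: "graph_connected (link T u)" using closed_facts(4)[OF T uv] .
  have c0L: "c0 \<in> \<Union>(link T u)"
  proof -
    have "{u,c0,p} - {u} \<in> link T u" unfolding link_mem using p by blast
    moreover have "c0 \<in> {u,c0,p} - {u}" using tri_distinct[OF cp] by blast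
    ultimately show ?thesis by blast
  qed
  show "nbrs T u \<subseteq> C"
  proof
    fix x assume "x \<in> nbrs T u"
    then obtain t where t: "t \<in> T" "u \<in> t" "x \<in> t" "x \<noteq> u" unfolding nbrs_def by blast
    have "t - {u} \<in> link T u" unfolding link_mem using t by blast
    then have "x \<in> \<Union>(link T u)" using t by blast
    then have "(\<lambda>x y. {x, y} \<in> link T u)\<^sup>*\<^sup>* c0 x" using gc c0L unfolding graph_connected_def by blast
    then show "x \<in> C"
    proof (induction rule: rtranclp_induct)
      case base then show ?case using c0 .
    next
      case (step y z)
      obtain t where t: "{y,z} = t - {u}" "t \<in> T" "u \<in> t" using step(2) unfolding link_mem by blast
      have tt: "t = {u,y,z}" using t(1,3) by blast
      obtain p q where pq: "p \<in> C" "q \<in> C" "p \<noteq> q" "{u,y,p} \<in> T" "{u,y,q} \<in> T"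
        using H step(3) by blast
      have "z = p \<or> z = q" using third[OF T pq(4) pq(5) pq(3)] t(2) tt by blast
      then show ?case using pq by blast
    qed
  qed
qed

lemma vert_edge:
  assumes T: "closed_surface T" and x: "x \<in> verts T"
  shows "x \<in> \<Union>(edges T)"
proof -
  obtain t where t: "t \<in> T" "x \<in> t" using x unfolding verts_def by blast
  obtain a b where ab: "t = {x,a,b}" "a \<noteq> x" using card3_split[OF closed_facts(2)[OF T t(1)] t(2)] by blast
  have "{x,a} \<in> edges T" unfolding edges_def using ab t(1) by auto
  then show ?thesis by blast
qed

lemma vc:
  assumes T: "closed_surface T" and w: "w \<in> S" "w \<in> verts T"
    and cl: "\<forall>s\<in>S. nbrs T s \<subseteq> S"
  shows "verts T \<subseteq> S"
proof
  fix x assume x: "x \<in> verts T"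
  have "graph_connected (edges T)" using closed_facts(5)[OF T] unfolding cx_connected_def .
  then have "(\<lambda>p q. {p,q} \<in> edges T)\<^sup>*\<^sup>* w x"
    using vert_edge[OF T w(2)] vert_edge[OF T x] unfolding graph_connected_def by blast
  then show "x \<in> S"
  proof (induction rule: rtranclp_induct)
    case base then show ?case using w(1) .
  next
    case (step p q)
    from step(2) obtain t where "card {p,q} = 2" "t \<in> T" "{p,q} \<subseteq> t" unfolding edges_def by blast
    moreover have "p \<noteq> q" using \<open>card {p,q} = 2\<close> by (cases "p = q") auto
    ultimately have "q \<in> nbrs T p" unfolding nbrs_def by blast
    then show ?case using cl step(3) by blast
  qed
qed

lemma finite_nbrs:
  assumes T: "closed_surface T" shows "finite (nbrs T u)"
proof -
  have "nbrs T u \<subseteq> \<Union>T" unfolding nbrs_def by blast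
  moreover have "finite (\<Union>T)"
  proof (rule finite_Union)
    show "finite T" using closed_facts(1)[OF T] .
    fix t assume "t \<in> T" then have "card t = 3" using closed_facts(2)[OF T] by blast
    then show "finite t" by (metis card.infinite zero_neq_numeral)
  qed
  ultimately show ?thesis using finite_subset by blast
qed

lemma vn:
  assumes T: "closed_surface T"
  shows "valence T u = card (nbrs T u)"
proof -
  define A where "A = {t\<in>T. u\<in>t}"
  define N where "N = nbrs T u"
  define P where "P = Sigma A (\<lambda>t. t - {u})"
  define Q where "Q = Sigma N (\<lambda>x. {t\<in>T. {u,x} \<subseteq> t})"
  have fT: "finite T" using closed_facts(1)[OF T] .
  have fA: "finite A" unfolding A_def using fT by simp
  have fN: "finite N" unfolding N_def using finite_nbrs[OF T] .
  have ft: "finite t" if "t \<in> T" for t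
    using closed_facts(2)[OF T that] by (metis card.infinite zero_neq_numeral)
  have "card P = (\<Sum>t\<in>A. card (t - {u}))" unfolding P_def using fA ft A_def by simp
  also have "\<dots> = (\<Sum>t\<in>A. 2)"
  proof (rule sum.cong)
    fix t assume "t \<in> A"
    then have "card t = 3" "u \<in> t" "finite t" using closed_facts(2)[OF T] ft unfolding A_def by auto
    then show "card (t - {u}) = 2" by (simp add: card_Diff_singleton)
  qed simp
  finally have cP: "card P = 2 * card A" by simp
  have "card Q = (\<Sum>x\<in>N. card {t\<in>T. {u,x} \<subseteq> t})" unfolding Q_def using fN fT by simp
  also have "\<dots> = (\<Sum>x\<in>N. 2)"
  proof (rule sum.cong)
    fix x assume "x \<in> N"
    then obtain t where t: "x \<noteq> u" "t \<in> T" "u \<in> t" "x \<in> t" unfolding N_def nbrs_def by blast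
    then have "{u,x} \<in> edges T" unfolding edges_def by auto
    then show "card {t\<in>T. {u,x} \<subseteq> t} = 2" using closed_facts(3)[OF T] unfolding tri_count_def by blast
  qed simp
  finally have cQ: "card Q = 2 * card N" by simp
  have "Q = (\<lambda>(t,x). (x,t)) ` P" unfolding P_def Q_def A_def N_def nbrs_def by auto
  moreover have "inj_on (\<lambda>(t,x). (x,t)) P" unfolding inj_on_def by auto
  ultimately have "card Q = card P" by (simp add: card_image)
  then have "card A = card N" using cP cQ by simp
  then show ?thesis unfolding valence_def A_def N_def .
qed

lemma nbrs_ge3:
  assumes T: "closed_surface T" and u: "u \<in> verts T"
  shows "3 \<le> card (nbrs T u)"
proof -
  obtain t where t: "t \<in> T" "u \<in> t" using u unfolding verts_def by blast
  obtain a b where ab: "t = {u,a,b}" "a \<noteq> b" "a \<noteq> u" "b \<noteq> u"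
    using card3_split[OF closed_facts(2)[OF T t(1)] t(2)] by blast
  have tt: "{u,a,b} \<in> T" using t(1) ab(1) by simp
  obtain c where c: "{u,a,c} \<in> T" "c \<noteq> b" using exother[OF T tt] by blast
  have cc: "card {u,a,c} = 3" using closed_facts(2)[OF T c(1)] .
  then have cd: "c \<noteq> u" "c \<noteq> a" using tri_distinct[OF cc] by blast+
  have "a \<in> nbrs T u" "b \<in> nbrs T u" unfolding nbrs_def using ab t by blast+
  moreover have "c \<in> nbrs T u" unfolding nbrs_def using c(1) cd by blast
  ultimately have "{a,b,c} \<subseteq> nbrs T u" by blast
  moreover have "card {a,b,c} = 3" using ab(2) cd(2) c(2) by simp
  ultimately show ?thesis using card_mono[OF finite_nbrs[OF T], of "{a,b,c}"] by simp
qed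



lemma tri_in:
  assumes T: "closed_surface T" and "{x,y,z} \<in> T"
  shows "x \<noteq> y" "x \<noteq> z" "y \<noteq> z"
  using tri_distinct[OF closed_facts(2)[OF T assms(2)]] by blast+

lemma cyc3:
  assumes T: "closed_surface T" and h: "{u,x,y} \<in> T" "{u,y,z} \<in> T" "{u,z,x} \<in> T"
  shows "nbrs T u = {x,y,z}"
proof (rule clos[OF T, of x])
  have d: "y \<noteq> z" "x \<noteq> z" "x \<noteq> y" using tri_in[OF T h(2)] tri_in[OF T h(3)] tri_in[OF T h(1)] by blast+
  have h': "{u,y,x} \<in> T" "{u,x,z} \<in> T" "{u,z,y} \<in> T" using h by (simp_all add: insert_commute)
  show "\<forall>c\<in>{x,y,z}. \<exists>p\<in>{x,y,z}. \<exists>q\<in>{x,y,z}. p \<noteq> q \<and> {u,c,p} \<in> T \<and> {u,c,q} \<in> T"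
  proof
    fix c assume "c \<in> {x,y,z}"
    then consider "c = x" | "c = y" | "c = z" by blast
    then show "\<exists>p\<in>{x,y,z}. \<exists>q\<in>{x,y,z}. p \<noteq> q \<and> {u,c,p} \<in> T \<and> {u,c,q} \<in> T"
    proof cases
      case 1 show ?thesis unfolding 1 apply (rule bexI[of _ y], rule bexI[of _ z]) using d h h' by auto
    next
      case 2 show ?thesis unfolding 2 apply (rule bexI[of _ x], rule bexI[of _ z]) using d h h' by auto
    next
      case 3 show ?thesis unfolding 3 apply (rule bexI[of _ x], rule bexI[of _ y]) using d h h' by auto
    qed
  qed
qed simp

lemma cyc4:
  assumes T: "closed_surface T" and h: "{u,x,y} \<in> T" "{u,y,z} \<in> T" "{u,z,r} \<in> T" "{u,r,x} \<in> T"
    and d0: "x \<noteq> z" "y \<noteq> r"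
  shows "nbrs T u = {x,y,z,r}"
proof (rule clos[OF T, of x])
  have d: "x \<noteq> y" "y \<noteq> z" "z \<noteq> r" "r \<noteq> x"
    using tri_in[OF T h(1)] tri_in[OF T h(2)] tri_in[OF T h(3)] tri_in[OF T h(4)] by blast+
  have h': "{u,y,x} \<in> T" "{u,z,y} \<in> T" "{u,r,z} \<in> T" "{u,x,r} \<in> T" using h by (simp_all add: insert_commute)
  show "\<forall>c\<in>{x,y,z,r}. \<exists>p\<in>{x,y,z,r}. \<exists>q\<in>{x,y,z,r}. p \<noteq> q \<and> {u,c,p} \<in> T \<and> {u,c,q} \<in> T"
  proof
    fix c assume "c \<in> {x,y,z,r}"
    then consider "c = x" | "c = y" | "c = z" | "c = r" by blast
    then show "\<exists>p\<in>{x,y,z,r}. \<exists>q\<in>{x,y,z,r}. p \<noteq> q \<and> {u,c,p} \<in> T \<and> {u,c,q} \<in> T"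
    proof cases
      case 1 show ?thesis unfolding 1 apply (rule bexI[of _ y], rule bexI[of _ r]) using d d0 h h' by auto
    next
      case 2 show ?thesis unfolding 2 apply (rule bexI[of _ x], rule bexI[of _ z]) using d d0 h h' by auto
    next
      case 3 show ?thesis unfolding 3 apply (rule bexI[of _ y], rule bexI[of _ r]) using d d0 h h' by auto
    next
      case 4 show ?thesis unfolding 4 apply (rule bexI[of _ z], rule bexI[of _ x]) using d d0 h h' by auto
    qed
  qed
qed simp

lemma notri:
  assumes T: "closed_surface T" and n: "card (nbrs T a) \<noteq> 3"
    and h: "{u,a,b} \<in> T" "{u,a,c} \<in> T" "b \<noteq> c"
  shows "{a,b,c} \<notin> T"
proof
  assume abc: "{a,b,c} \<in> T"
  have "{a,u,b} \<in> T" "{a,b,c} \<in> T" "{a,c,u} \<in> T" using h abc by (simp_all add: insert_commute)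
  then have "nbrs T a = {u,b,c}" using cyc3[OF T] by blast
  moreover have "u \<noteq> b" "u \<noteq> c" using tri_in[OF T h(1)] tri_in[OF T h(2)] by blast+
  ultimately have "card (nbrs T a) = 3" using h(3) by simp
  then show False using n by simp
qed

lemma nbrsI: "t \<in> T \<Longrightarrow> x \<in> t \<Longrightarrow> y \<in> t \<Longrightarrow> y \<noteq> x \<Longrightarrow> y \<in> nbrs T x"
  unfolding nbrs_def by blast

lemma wp:
  assumes T: "closed_surface T" and n: "card (nbrs T a) \<le> 4"
    and h: "{u,a,b} \<in> T" "{u,a,c} \<in> T" "b \<noteq> c" and nt: "{a,b,c} \<notin> T"
  shows "\<exists>z. z \<notin> {u,a,b,c} \<and> {a,b,z} \<in> T \<and> {a,c,z} \<in> T \<and> nbrs T a = {u,b,c,z}"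
proof -
  have h1: "{a,b,u} \<in> T" "{a,c,u} \<in> T" using h by (simp_all add: insert_commute)
  obtain z where z: "{a,b,z} \<in> T" "z \<noteq> u" using exother[OF T h1(1)] by blast
  obtain z' where z': "{a,c,z'} \<in> T" "z' \<noteq> u" using exother[OF T h1(2)] by blast
  have dz: "z \<noteq> a" "z \<noteq> b" using tri_in[OF T z(1)] by blast+
  have dz': "z' \<noteq> a" "z' \<noteq> c" using tri_in[OF T z'(1)] by blast+
  have dd: "u \<noteq> a" "u \<noteq> b" "a \<noteq> b" "u \<noteq> c" "a \<noteq> c" using tri_in[OF T h(1)] tri_in[OF T h(2)] by blast+
  have zc: "z \<noteq> c"
  proof
    assume "z = c" then have "{a,b,c} \<in> T" using z(1) by simp
    then show False using nt by simp
  qed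
  have z'b: "z' \<noteq> b"
  proof
    assume "z' = b" then have "{a,b,c} \<in> T" using z'(1) by (simp add: insert_commute)
    then show False using nt by simp
  qed
  have m1: "u \<in> nbrs T a" by (rule nbrsI[OF h(1)]) (simp_all add: dd dd[THEN not_sym])
  have m2: "b \<in> nbrs T a" by (rule nbrsI[OF h(1)]) (simp_all add: dd dd[THEN not_sym])
  have m3: "c \<in> nbrs T a" by (rule nbrsI[OF h(2)]) (simp_all add: dd dd[THEN not_sym])
  have m4: "z \<in> nbrs T a" by (rule nbrsI[OF z(1)]) (simp_all add: dz dz[THEN not_sym])
  have m5: "z' \<in> nbrs T a" by (rule nbrsI[OF z'(1)]) (simp_all add: dz' dz'[THEN not_sym])
  have sub: "{u,b,c,z} \<subseteq> nbrs T a" using m1 m2 m3 m4 by simp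
  have c4: "card {u,b,c,z} = 4" using dd dz zc z(2) h(3) by simp
  have le: "card {u,b,c,z} \<le> card (nbrs T a)" by (rule card_mono[OF finite_nbrs[OF T] sub])
  have eq: "nbrs T a = {u,b,c,z}"
    by (rule sym, rule card_subset_eq[OF finite_nbrs[OF T] sub]) (use c4 n le in simp)
  have "z' = z" using m5 eq z'(2) z'b dz'(2) by simp
  show ?thesis
    apply (rule exI[of _ z])
    using z z' eq dz zc \<open>z' = z\<close> by simp
qed



lemma finite_verts:
  assumes T: "closed_surface T" shows "finite (verts T)"
proof -
  have "finite (\<Union>T)"
  proof (rule finite_Union)
    show "finite T" using closed_facts(1)[OF T] .
    fix t assume "t \<in> T" then have "card t = 3" using closed_facts(2)[OF T] by blast
    then show "finite t" by (metis card.infinite zero_neq_numeral)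
  qed
  then show ?thesis unfolding verts_def .
qed

lemma verts_sub:
  assumes T: "closed_surface T" and S: "finite S" "card S \<le> n" "verts T \<subseteq> S"
  shows "card (verts T) \<le> n"
  using card_mono[OF S(1) S(3)] S(2) by simp

lemma in_vertsI: "{x,y,z} \<in> T \<Longrightarrow> x \<in> verts T \<and> y \<in> verts T \<and> z \<in> verts T"
  unfolding verts_def by blast

lemma deg_case3:
  assumes T: "closed_surface T" and H: "\<forall>u\<in>verts T. card (nbrs T u) \<le> 4"
    and w: "w \<in> verts T" "card (nbrs T w) = 3"
  shows "card (verts T) \<le> 6"
proof -
  obtain t where t: "t \<in> T" "w \<in> t" using w unfolding verts_def by blast
  obtain a b where ab: "t = {w,a,b}" using card3_split[OF closed_facts(2)[OF T t(1)] t(2)] by blast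
  have wab: "{w,a,b} \<in> T" using t(1) ab by simp
  obtain c where c: "{w,a,c} \<in> T" "c \<noteq> b" using exother[OF T wab] by blast
  have d1: "w \<noteq> a" "w \<noteq> b" "a \<noteq> b" using tri_in[OF T wab] by blast+
  have d2: "w \<noteq> c" "a \<noteq> c" using tri_in[OF T c(1)] by blast+
  have m: "a \<in> nbrs T w" "b \<in> nbrs T w" "c \<in> nbrs T w"
    by (rule nbrsI[OF wab]; simp add: d1 d1[THEN not_sym])+
      (rule nbrsI[OF c(1)]; simp add: d2 d2[THEN not_sym])
  have sub: "{a,b,c} \<subseteq> nbrs T w" using m by simp
  have eqw: "nbrs T w = {a,b,c}"
    by (rule sym, rule card_subset_eq[OF finite_nbrs[OF T] sub]) (use w(2) d1 d2 c(2) in simp)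
  have wba: "{w,b,a} \<in> T" using wab by (simp add: insert_commute)
  obtain y where y: "{w,b,y} \<in> T" "y \<noteq> a" using exother[OF T wba] by blast
  have dy: "y \<noteq> w" "y \<noteq> b" using tri_in[OF T y(1)] by blast+
  have "y \<in> nbrs T w" by (rule nbrsI[OF y(1)]) (simp_all add: dy)
  then have "y = c" using eqw y(2) dy(2) by simp
  then have wbc: "{w,b,c} \<in> T" using y(1) by simp
  have wca: "{w,c,a} \<in> T" using c(1) by (simp add: insert_commute)
  have fin: "\<And>S::'a set. finite S \<Longrightarrow> card S \<le> 6 \<Longrightarrow> verts T \<subseteq> S \<Longrightarrow> card (verts T) \<le> 6"
    using verts_sub[OF T] by blast
  show ?thesis
  proof (cases "{a,b,c} \<in> T")
    case True
    have na: "nbrs T a = {w,b,c}"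
      by (rule cyc3[OF T]) (use wab c(1) True in \<open>simp_all add: insert_commute\<close>)
    have nb: "nbrs T b = {w,a,c}"
      by (rule cyc3[OF T]) (use wab wbc True in \<open>simp_all add: insert_commute\<close>)
    have nc: "nbrs T c = {w,a,b}"
      by (rule cyc3[OF T]) (use wbc c(1) True in \<open>simp_all add: insert_commute\<close>)
    have sub: "verts T \<subseteq> {w,a,b,c}"
      by (rule vc[OF T _ w(1)]) (use eqw na nb nc in simp_all)
    have c6: "card {w,a,b,c} \<le> 6" using card_length[of "[w,a,b,c]"] by simp
    show ?thesis by (rule fin[OF _ c6 sub]) simp
  next
    case False
    have Ha: "card (nbrs T a) \<le> 4" using H in_vertsI[OF wab] by blast
    have Hb: "card (nbrs T b) \<le> 4" using H in_vertsI[OF wab] by blast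
    have Hc: "card (nbrs T c) \<le> 4" using H in_vertsI[OF c(1)] by blast
    obtain z where z: "z \<notin> {w,a,b,c}" "{a,b,z} \<in> T" "{a,c,z} \<in> T" "nbrs T a = {w,b,c,z}"
      using wp[OF T Ha, of w b c] wab c(1) c(2)[THEN not_sym] False by (auto simp: insert_commute)
    have F2: "{b,a,c} \<notin> T" using False by (simp add: insert_commute)
    obtain z2 where z2: "z2 \<notin> {w,b,a,c}" "{b,a,z2} \<in> T" "{b,c,z2} \<in> T" "nbrs T b = {w,a,c,z2}"
      using wp[OF T Hb, of w a c] wab wbc d2(2) F2 by (auto simp: insert_commute)
    have F3: "{c,a,b} \<notin> T" using False by (simp add: insert_commute)
    obtain z3 where z3: "z3 \<notin> {w,c,a,b}" "{c,a,z3} \<in> T" "{c,b,z3} \<in> T" "nbrs T c = {w,a,b,z3}"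
      using wp[OF T Hc, of w a b] c(1) wbc d1(3) F3 by (auto simp: insert_commute)
    have e1: "{a,b,w} \<in> T" using wab by (simp add: insert_commute)
    have e2: "{a,b,z2} \<in> T" using z2(2) by (simp add: insert_commute)
    have "z2 = w \<or> z2 = z" using third[OF T e1 z(2) _ e2] z(1) by auto
    then have zz2: "z2 = z" using z2(1) by auto
    have e3: "{a,c,w} \<in> T" using c(1) by (simp add: insert_commute)
    have e4: "{a,c,z3} \<in> T" using z3(2) by (simp add: insert_commute)
    have "z3 = w \<or> z3 = z" using third[OF T e3 z(3) _ e4] z(1) by auto
    then have zz3: "z3 = z" using z3(1) by auto
    have nz: "nbrs T z = {a,b,c}"
      by (rule cyc3[OF T]) (use z(2) z(3) z2(3) zz2 in \<open>simp_all add: insert_commute\<close>)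
    have sub: "verts T \<subseteq> {w,a,b,c,z}"
      by (rule vc[OF T _ w(1)]) (use eqw z(4) z2(4) z3(4) zz2 zz3 nz in simp_all)
    have c6: "card {w,a,b,c,z} \<le> 6" using card_length[of "[w,a,b,c,z]"] by simp
    show ?thesis by (rule fin[OF _ c6 sub]) simp
  qed
qed

lemma deg_case4:
  assumes T: "closed_surface T" and H: "\<forall>u\<in>verts T. card (nbrs T u) \<le> 4"
    and H3: "\<forall>u\<in>verts T. card (nbrs T u) \<noteq> 3" and w: "w \<in> verts T"
  shows "card (verts T) \<le> 6"
proof -
  obtain t where t: "t \<in> T" "w \<in> t" using w unfolding verts_def by blast
  obtain a1 a2 where ab: "t = {w,a1,a2}" using card3_split[OF closed_facts(2)[OF T t(1)] t(2)] by blast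
  have w12: "{w,a1,a2} \<in> T" using t(1) ab by simp
  have w21: "{w,a2,a1} \<in> T" using w12 by (simp add: insert_commute)
  obtain a3 where a3: "{w,a2,a3} \<in> T" "a3 \<noteq> a1" using exother[OF T w21] by blast
  obtain a4 where a4: "{w,a1,a4} \<in> T" "a4 \<noteq> a2" using exother[OF T w12] by blast
  have d1: "w \<noteq> a1" "w \<noteq> a2" "a1 \<noteq> a2" using tri_in[OF T w12] by blast+
  have d2: "w \<noteq> a3" "a2 \<noteq> a3" using tri_in[OF T a3(1)] by blast+
  have d3: "w \<noteq> a4" "a1 \<noteq> a4" using tri_in[OF T a4(1)] by blast+
  have w31: "{w,a3,a1} \<notin> T" if "a3 = a4"
  proof
    assume h: "{w,a3,a1} \<in> T"
    have "nbrs T w = {a1,a2,a3}" by (rule cyc3[OF T w12 a3(1) h])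
    then have "card (nbrs T w) = 3" using d1 d2 a3(2) by simp
    then show False using H3 w by blast
  qed
  have d34: "a3 \<noteq> a4"
  proof
    assume e: "a3 = a4"
    have "{w,a3,a1} \<in> T" using a4(1) e by (simp add: insert_commute)
    then show False using w31[OF e] by simp
  qed
  have Hw: "card (nbrs T w) \<le> 4" using H w by blast
  have w32: "{w,a3,a2} \<in> T" using a3(1) by (simp add: insert_commute)
  obtain y where y: "{w,a3,y} \<in> T" "y \<noteq> a2" using exother[OF T w32] by blast
  have dy: "y \<noteq> w" "y \<noteq> a3" using tri_in[OF T y(1)] by blast+
  have ya1: "y \<noteq> a1"
  proof
    assume e: "y = a1"
    have "{w,a1,a3} \<in> T" using y(1) e by (simp add: insert_commute)
    then have "a3 = a2 \<or> a3 = a4" using third[OF T w12 a4(1) a4(2)[THEN not_sym]] by blast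
    then show False using d2 d34 by blast
  qed
  have ya4: "y = a4"
  proof (rule ccontr)
    assume ne: "y \<noteq> a4"
    have m1: "a1 \<in> nbrs T w" by (rule nbrsI[OF w12]) (simp_all add: d1 d1[THEN not_sym])
    have m2: "a2 \<in> nbrs T w" by (rule nbrsI[OF w12]) (simp_all add: d1 d1[THEN not_sym])
    have m3: "a3 \<in> nbrs T w" by (rule nbrsI[OF a3(1)]) (simp_all add: d2 d2[THEN not_sym])
    have m4: "a4 \<in> nbrs T w" by (rule nbrsI[OF a4(1)]) (simp_all add: d3 d3[THEN not_sym])
    have m5: "y \<in> nbrs T w" by (rule nbrsI[OF y(1)]) (simp_all add: dy dy[THEN not_sym])
    have sub: "{a1,a2,a3,a4,y} \<subseteq> nbrs T w" using m1 m2 m3 m4 m5 by simp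
    have "card {a1,a2,a3,a4,y} = 5" using d1 d2 d3 d34 a3(2) a4(2) dy ya1 y(2) ne by simp
    then have "5 \<le> card (nbrs T w)" using card_mono[OF finite_nbrs[OF T] sub] by simp
    then show False using Hw by simp
  qed
  have w34: "{w,a3,a4} \<in> T" using y(1) ya4 by simp
  have w41: "{w,a4,a1} \<in> T" using a4(1) by (simp add: insert_commute)
  have nw: "nbrs T w = {a1,a2,a3,a4}" by (rule cyc4[OF T w12 a3(1) w34 w41]) (use a3(2) a4(2) in auto)
  have v1: "a1 \<in> verts T" "a2 \<in> verts T" "a3 \<in> verts T" "a4 \<in> verts T"
    using in_vertsI[OF w12] in_vertsI[OF w34] by blast+
  have H1: "card (nbrs T a1) \<le> 4" "card (nbrs T a2) \<le> 4" "card (nbrs T a3) \<le> 4" "card (nbrs T a4) \<le> 4"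
    using H v1 by blast+
  have H31: "card (nbrs T a1) \<noteq> 3" "card (nbrs T a2) \<noteq> 3" "card (nbrs T a3) \<noteq> 3" "card (nbrs T a4) \<noteq> 3"
    using H3 v1 by blast+
  have w43: "{w,a4,a3} \<in> T" using w34 by (simp add: insert_commute)
  have n1: "{a1,a2,a4} \<notin> T" by (rule notri[OF T H31(1) w12 a4(1) a4(2)[THEN not_sym]])
  obtain z where z: "z \<notin> {w,a1,a2,a4}" "{a1,a2,z} \<in> T" "{a1,a4,z} \<in> T" "nbrs T a1 = {w,a2,a4,z}"
    using wp[OF T H1(1) w12 a4(1) a4(2)[THEN not_sym] n1] by blast
  have n2: "{a2,a1,a3} \<notin> T" by (rule notri[OF T H31(2) w21 a3(1) a3(2)[THEN not_sym]])
  obtain z2 where z2: "z2 \<notin> {w,a2,a1,a3}" "{a2,a1,z2} \<in> T" "{a2,a3,z2} \<in> T" "nbrs T a2 = {w,a1,a3,z2}"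
    using wp[OF T H1(2) w21 a3(1) a3(2)[THEN not_sym] n2] by blast
  have n3: "{a3,a2,a4} \<notin> T" by (rule notri[OF T H31(3) w32 w34 a4(2)[THEN not_sym]])
  obtain z3 where z3: "z3 \<notin> {w,a3,a2,a4}" "{a3,a2,z3} \<in> T" "{a3,a4,z3} \<in> T" "nbrs T a3 = {w,a2,a4,z3}"
    using wp[OF T H1(3) w32 w34 a4(2)[THEN not_sym] n3] by blast
  have n4: "{a4,a3,a1} \<notin> T" by (rule notri[OF T H31(4) w43 w41 a3(2)])
  obtain z4 where z4: "z4 \<notin> {w,a4,a3,a1}" "{a4,a3,z4} \<in> T" "{a4,a1,z4} \<in> T" "nbrs T a4 = {w,a3,a1,z4}"
    using wp[OF T H1(4) w43 w41 a3(2) n4] by blast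
  have e1: "{a1,a2,w} \<in> T" using w12 by (simp add: insert_commute)
  have e2: "{a1,a2,z2} \<in> T" using z2(2) by (simp add: insert_commute)
  have "z2 = w \<or> z2 = z" by (rule third[OF T e1 z(2) _ e2]) (use z(1) in auto)
  then have zz2: "z2 = z" using z2(1) by auto
  have e3: "{a2,a3,w} \<in> T" using a3(1) by (simp add: insert_commute)
  have e4: "{a3,a2,w} \<in> T" using a3(1) by (simp add: insert_commute)
  have e5: "{a2,a3,z3} \<in> T" using z3(2) by (simp add: insert_commute)
  have "z3 = w \<or> z3 = z2" by (rule third[OF T e3 z2(3) _ e5]) (use z2(1) in auto)
  then have zz3: "z3 = z" using z3(1) zz2 by auto
  have e6: "{a3,a4,w} \<in> T" using w34 by (simp add: insert_commute)
  have e7: "{a3,a4,z4} \<in> T" using z4(2) by (simp add: insert_commute)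
  have "z4 = w \<or> z4 = z3" by (rule third[OF T e6 z3(3) _ e7]) (use z3(1) in auto)
  then have zz4: "z4 = z" using z4(1) zz3 by auto
  have nz: "nbrs T z = {a1,a2,a3,a4}"
    by (rule cyc4[OF T]) (use z(2) z(3) z2(3) z3(3) zz2 zz3 a3(2) a4(2) in \<open>simp_all add: insert_commute\<close>)
  have sub: "verts T \<subseteq> {w,a1,a2,a3,a4,z}"
    by (rule vc[OF T _ w]) (use nw z(4) z2(4) z3(4) z4(4) zz2 zz3 zz4 nz in simp_all)
  have c6: "card {w,a1,a2,a3,a4,z} \<le> 6" using card_length[of "[w,a1,a2,a3,a4,z]"] by simp
  show ?thesis using card_mono[OF _ sub] c6 by simp
qed

lemma deg:
  assumes T: "closed_surface T" and H: "\<forall>u\<in>verts T. card (nbrs T u) \<le> 4"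
  shows "card (verts T) \<le> 6"
proof (cases "\<exists>w\<in>verts T. card (nbrs T w) = 3")
  case True
  then obtain w where "w \<in> verts T" "card (nbrs T w) = 3" by blast
  then show ?thesis using deg_case3[OF T H] by blast
next
  case False
  have "T \<noteq> {}" using T unfolding closed_surface_def is_surface_def by blast
  then obtain t where t: "t \<in> T" by blast
  have "card t = 3" using closed_facts(2)[OF T t] .
  then obtain w where "w \<in> t" by (metis card.empty ex_in_conv zero_neq_numeral)
  then have w: "w \<in> verts T" using t unfolding verts_def by blast
  show ?thesis by (rule deg_case4[OF T H _ w]) (use False in blast)
qed



lemma surf_facts:
  assumes "is_surface K"
  shows "finite K" "K \<noteq> {}" "\<And>t. t \<in> K \<Longrightarrow> card t = 3"
    "\<And>e. e \<in> edges K \<Longrightarrow> tri_count K e = 1 \<or> tri_count K e = 2"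
  using assms unfolding is_surface_def by auto

lemma star_in:
  assumes T: "closed_surface T" and K: "is_surface K" and KT: "K \<subseteq> T"
    and v: "v \<in> verts K" and nb: "v \<notin> bd_verts K"
  shows "\<forall>t\<in>T. v \<in> t \<longrightarrow> t \<in> K"
proof -
  have Q: "\<forall>t\<in>T. {v,y} \<subseteq> t \<longrightarrow> t \<in> K" if y: "y \<noteq> v" "\<exists>t\<in>K. {v,y} \<subseteq> t" for y
  proof -
    have c2: "card {v,y} = 2" using y(1) by simp
    have eK: "{v,y} \<in> edges K" unfolding edges_def using c2 y(2) by blast
    have eT: "{v,y} \<in> edges T" unfolding edges_def using c2 y(2) KT by blast
    have "tri_count K {v,y} \<noteq> 1"
    proof
      assume "tri_count K {v,y} = 1"
      then have "{v,y} \<in> bd_edges K" unfolding bd_edges_def using eK by blast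
      then have "v \<in> bd_verts K" unfolding bd_verts_def by blast
      then show False using nb by blast
    qed
    then have cK: "card {t\<in>K. {v,y} \<subseteq> t} = 2" using surf_facts(4)[OF K eK] unfolding tri_count_def by auto
    have cT: "card {t\<in>T. {v,y} \<subseteq> t} = 2" using closed_facts(3)[OF T eT] unfolding tri_count_def .
    have sub: "{t\<in>K. {v,y} \<subseteq> t} \<subseteq> {t\<in>T. {v,y} \<subseteq> t}" using KT by blast
    have fT: "finite {t\<in>T. {v,y} \<subseteq> t}" using closed_facts(1)[OF T] by simp
    have "{t\<in>K. {v,y} \<subseteq> t} = {t\<in>T. {v,y} \<subseteq> t}"
      by (rule card_subset_eq[OF fT sub]) (use cK cT in simp)
    then show ?thesis by blast
  qed
  obtain t0 where t0: "t0 \<in> K" "v \<in> t0" using v unfolding verts_def by blast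
  obtain p q where pq: "t0 = {v,p,q}" "p \<noteq> v" using card3_split[OF surf_facts(3)[OF K t0(1)] t0(2)] by blast
  have vT: "v \<in> verts T" using t0 KT unfolding verts_def by blast
  have gc: "graph_connected (link T v)" using closed_facts(4)[OF T vT] .
  have pL: "p \<in> \<Union>(link T v)"
  proof -
    have "t0 - {v} \<in> link T v" unfolding link_mem using t0 KT by blast
    then show ?thesis using pq by blast
  qed
  show ?thesis
  proof (intro ballI impI)
    fix t assume t: "t \<in> T" "v \<in> t"
    obtain a b where ab: "t = {v,a,b}" "a \<noteq> v" using card3_split[OF closed_facts(2)[OF T t(1)] t(2)] by blast
    have "t - {v} \<in> link T v" unfolding link_mem using t by blast
    then have aL: "a \<in> \<Union>(link T v)" using ab by blast
    have "(\<lambda>x y. {x,y} \<in> link T v)\<^sup>*\<^sup>* p a" using gc pL aL unfolding graph_connected_def by blast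
    then have "a \<noteq> v \<and> (\<exists>t\<in>K. {v,a} \<subseteq> t)"
    proof (induction rule: rtranclp_induct)
      case base then show ?case using pq t0 by blast
    next
      case (step x y)
      obtain t' where t': "{x,y} = t' - {v}" "t' \<in> T" "v \<in> t'" using step(2) unfolding link_mem by blast
      have "{v,x} \<subseteq> t'" using t' by blast
      then have "t' \<in> K" using Q[of x] step(3) t'(2) by blast
      moreover have "y \<noteq> v" "{v,y} \<subseteq> t'" using t' by blast+
      ultimately show ?case by blast
    qed
    then show "t \<in> K" using Q[of a] t ab by blast
  qed
qed



definition circE :: "'a set set \<Rightarrow> 'a set set \<Rightarrow> 'a set set" where
  "circE G X = {s \<in> faces G \<inter> faces X. card s = 2}"

definition bdR :: "'a set set \<Rightarrow> 'a \<Rightarrow> 'a \<Rightarrow> bool" where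
  "bdR G = (\<lambda>x y. {x,y} \<in> bd_edges G)\<^sup>*\<^sup>*"

lemma bdR_sym:
  assumes "bdR G a b" shows "bdR G b a"
  using assms unfolding bdR_def
proof (induction rule: rtranclp_induct)
  case base then show ?case by simp
next
  case (step x y)
  have "{y,x} \<in> bd_edges G" using step(2) by (simp add: insert_commute)
  then show ?case using step(3) by (rule converse_rtranclp_into_rtranclp)
qed

lemma bdR_trans: "bdR G a b \<Longrightarrow> bdR G b c \<Longrightarrow> bdR G a c"
  unfolding bdR_def by (rule rtranclp_trans)

lemma card2_split:
  assumes "card e = 2" "y \<in> e" shows "\<exists>a. e = {y,a} \<and> a \<noteq> y"
proof -
  have "card (e - {y}) = 1" using assms by (simp add: card_Diff_singleton)
  then obtain a where "e - {y} = {a}" using card_1_singletonE by blast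
  then have "e = {y,a}" "a \<noteq> y" using assms(2) by blast+
  then show ?thesis by blast
qed

lemma circ_facts:
  assumes T: "closed_surface T" and GT: "G \<subseteq> T" and XT: "X \<subseteq> T"
    and mo: "meet_ok G X" and ne: "faces G \<inter> faces X \<noteq> {}"
  shows "circE G X \<subseteq> bd_edges G"
    "\<forall>y\<in>\<Union>(circE G X). \<forall>z\<in>\<Union>(circE G X). bdR G y z"
    "3 \<le> card (\<Union>(circE G X))" "finite (\<Union>(circE G X))"
    "\<Union>(circE G X) \<subseteq> verts G"
    "\<And>y. {y} \<in> faces G \<Longrightarrow> {y} \<in> faces X \<Longrightarrow> y \<in> \<Union>(circE G X)"
proof -
  define S where "S = faces G \<inter> faces X"
  define E where "E = circE G X"
  have E_def': "E = {s\<in>S. card s = 2}" unfolding E_def S_def circE_def by simp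
  have circ: "is_circle_cx S" using mo ne unfolding meet_ok_def S_def by blast
  have fS: "finite S" and Ene: "E \<noteq> {}" and SE: "S = faces E"
    and deg2: "\<forall>v\<in>\<Union>E. card {e\<in>E. v \<in> e} = 2" and gcE: "graph_connected E"
    using circ unfolding is_circle_cx_def Let_def E_def'[symmetric] by auto
  have fe: "finite e" if "e \<in> E" for e
    using that unfolding E_def' by (metis (mono_tags, lifting) card.infinite mem_Collect_eq zero_neq_numeral)
  have c3: "card t = 3" if "t \<in> T" for t using closed_facts(2)[OF T that] .
  have noshare: "t \<notin> G" if "t \<in> X" for t
  proof
    assume tG: "t \<in> G"
    have "t \<noteq> {}" using c3[of t] that XT by auto
    then have "t \<in> S" unfolding S_def faces_def using tG that by blast
    then obtain e where e: "e \<in> E" "t \<subseteq> e" unfolding SE faces_def by blast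
    have "card t \<le> card e" by (rule card_mono[OF fe[OF e(1)] e(2)])
    moreover have "card e = 2" using e(1) unfolding E_def' by blast
    moreover have "card t = 3" using c3[of t] that XT by blast
    ultimately show False by simp
  qed
  show sub: "circE G X \<subseteq> bd_edges G"
  proof
    fix s assume "s \<in> circE G X"
    then have s: "s \<in> faces G" "s \<in> faces X" "card s = 2" unfolding circE_def by auto
    obtain tg where tg: "tg \<in> G" "s \<subseteq> tg" using s(1) unfolding faces_def by blast
    obtain tx where tx: "tx \<in> X" "s \<subseteq> tx" using s(2) unfolding faces_def by blast
    have sG: "s \<in> edges G" unfolding edges_def using s(3) tg by blast
    have sT: "s \<in> edges T" unfolding edges_def using s(3) tx XT by blast
    have cT: "card {t\<in>T. s \<subseteq> t} = 2" using closed_facts(3)[OF T sT] unfolding tri_count_def .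
    have fT: "finite {t\<in>T. s \<subseteq> t}" using closed_facts(1)[OF T] by simp
    have txin: "tx \<in> {t\<in>T. s \<subseteq> t}" using tx XT by blast
    have c1: "card ({t\<in>T. s \<subseteq> t} - {tx}) = 1" using cT txin fT by (simp add: card_Diff_singleton)
    have subA: "{t\<in>G. s \<subseteq> t} \<subseteq> {t\<in>T. s \<subseteq> t} - {tx}" using GT noshare[OF tx(1)] by blast
    have le1: "card {t\<in>G. s \<subseteq> t} \<le> 1" using card_mono[OF _ subA] c1 fT by simp
    have fG: "finite {t\<in>G. s \<subseteq> t}" using finite_subset[OF subA] fT by blast
    have "card {t\<in>G. s \<subseteq> t} \<noteq> 0" using fG tg by auto
    then have "tri_count G s = 1" unfolding tri_count_def using le1 by simp
    then show "s \<in> bd_edges G" unfolding bd_edges_def using sG by blast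
  qed
  show "\<forall>y\<in>\<Union>(circE G X). \<forall>z\<in>\<Union>(circE G X). bdR G y z"
  proof (intro ballI)
    fix y z assume "y \<in> \<Union>(circE G X)" "z \<in> \<Union>(circE G X)"
    then have "(\<lambda>x y. {x,y} \<in> E)\<^sup>*\<^sup>* y z" using gcE unfolding graph_connected_def E_def by blast
    then show "bdR G y z" unfolding bdR_def
    proof (induction rule: rtranclp_induct)
      case base then show ?case by simp
    next
      case (step a b)
      have "{a,b} \<in> bd_edges G" using step(2) sub unfolding E_def by blast
      then show ?case using step(3) by (simp add: rtranclp.rtrancl_into_rtrancl)
    qed
  qed
  have fU: "finite (\<Union>E)"
  proof (rule finite_Union)
    show "finite E" unfolding E_def' using fS by simp
  qed (use fe in blast)
  then show "finite (\<Union>(circE G X))" unfolding E_def .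
  show "3 \<le> card (\<Union>(circE G X))"
  proof -
    obtain e0 where e0: "e0 \<in> E" using Ene by blast
    have "card e0 = 2" using e0 unfolding E_def' by blast
    then obtain y where y: "y \<in> e0" by (metis card.empty ex_in_conv zero_neq_numeral)
    have yU: "y \<in> \<Union>E" using e0 y by blast
    have "card {e\<in>E. y \<in> e} = 2" using deg2 yU by blast
    then obtain e1 e2 where e12: "{e\<in>E. y \<in> e} = {e1,e2}" "e1 \<noteq> e2" by (meson card_2_iff)
    have e1: "e1 \<in> E" "y \<in> e1" "card e1 = 2" using e12(1) unfolding E_def' by blast+
    have e2: "e2 \<in> E" "y \<in> e2" "card e2 = 2" using e12(1) unfolding E_def' by blast+
    obtain a where a: "e1 = {y,a}" "a \<noteq> y" using card2_split[OF e1(3) e1(2)] by blast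
    obtain b where b: "e2 = {y,b}" "b \<noteq> y" using card2_split[OF e2(3) e2(2)] by blast
    have ab: "a \<noteq> b" using a b e12(2) by blast
    have "{y,a,b} \<subseteq> \<Union>E" using e1(1) e2(1) a(1) b(1) by blast
    then have "card {y,a,b} \<le> card (\<Union>E)" by (rule card_mono[OF fU])
    moreover have "card {y,a,b} = 3" using a(2) b(2) ab by simp
    ultimately show ?thesis unfolding E_def by simp
  qed
  show "\<Union>(circE G X) \<subseteq> verts G"
    unfolding circE_def faces_def verts_def by blast
  fix y assume "{y} \<in> faces G" "{y} \<in> faces X"
  then have "{y} \<in> S" unfolding S_def by blast
  then obtain e where "e \<in> E" "{y} \<subseteq> e" unfolding SE faces_def by blast
  then show "y \<in> \<Union>(circE G X)" unfolding E_def by blast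
qed



lemma bd_circle:
  assumes T: "closed_surface T" and GT: "G \<subseteq> T" and cover: "T \<subseteq> G \<union> \<Union>P"
    and x: "x \<in> bd_verts G"
  shows "\<exists>X\<in>P. faces G \<inter> faces X \<noteq> {} \<and> x \<in> \<Union>(circE G X)"
proof -
  obtain e where e: "e \<in> bd_edges G" "x \<in> e" using x unfolding bd_verts_def by blast
  have eG: "e \<in> edges G" "tri_count G e = 1" using e(1) unfolding bd_edges_def by blast+
  obtain tg where tg: "card e = 2" "tg \<in> G" "e \<subseteq> tg" using eG(1) unfolding edges_def by blast
  have eT: "e \<in> edges T" unfolding edges_def using tg GT by blast
  have cT: "card {t\<in>T. e \<subseteq> t} = 2" using closed_facts(3)[OF T eT] unfolding tri_count_def .
  have "\<exists>t\<in>T. e \<subseteq> t \<and> t \<notin> G"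
  proof (rule ccontr)
    assume "\<not> ?thesis"
    then have "{t\<in>T. e \<subseteq> t} = {t\<in>G. e \<subseteq> t}" using GT by blast
    then show False using cT eG(2) unfolding tri_count_def by simp
  qed
  then obtain t where t: "t \<in> T" "e \<subseteq> t" "t \<notin> G" by blast
  then obtain X where X: "X \<in> P" "t \<in> X" using cover by blast
  have ne: "e \<noteq> {}" using e(2) by blast
  have ef: "e \<in> faces G" "e \<in> faces X" unfolding faces_def using ne tg t X by blast+
  then have "e \<in> circE G X" unfolding circE_def using tg(1) by blast
  then have "x \<in> \<Union>(circE G X)" using e(2) by blast
  moreover have "faces G \<inter> faces X \<noteq> {}" using ef by blast
  ultimately show ?thesis using X(1) by blast
qed

lemma three_elems:
  assumes "3 \<le> card A"
  shows "\<exists>a b c. a \<in> A \<and> b \<in> A \<and> c \<in> A \<and> a \<noteq> b \<and> a \<noteq> c \<and> b \<noteq> c"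
proof -
  have f: "finite A" using assms by (metis card.infinite not_numeral_le_zero)
  obtain a where a: "a \<in> A" using assms by (metis card.empty ex_in_conv not_numeral_le_zero)
  have "2 \<le> card (A - {a})" using assms a f by (simp add: card_Diff_singleton)
  then obtain b where b: "b \<in> A - {a}" by (metis card.empty ex_in_conv not_numeral_le_zero)
  have "1 \<le> card (A - {a} - {b})" using \<open>2 \<le> card (A - {a})\<close> b f by (simp add: card_Diff_singleton)
  then obtain c where c: "c \<in> A - {a} - {b}" by (metis card.empty ex_in_conv not_one_le_zero)
  show ?thesis using a b c by blast
qed

lemma cls_eq:
  assumes "bdR G x y" shows "{(a,b). bdR G a b}``{x} = {(a,b). bdR G a b}``{y}"
proof (rule set_eqI)
  fix z
  have "bdR G x z \<longleftrightarrow> bdR G y z"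
    using bdR_trans[OF bdR_sym[OF assms], of z] bdR_trans[OF assms, of z] by blast
  then show "z \<in> {(a,b). bdR G a b}``{x} \<longleftrightarrow> z \<in> {(a,b). bdR G a b}``{y}" by simp
qed

lemma comp_set:
  assumes T: "closed_surface T" and GT: "G \<subseteq> T" and cover: "T \<subseteq> G \<union> \<Union>P"
    and PT: "\<forall>X\<in>P. X \<subseteq> T" and PM: "\<forall>X\<in>P. meet_ok G X" and x: "x \<in> bd_verts G"
  shows "\<exists>V. finite V \<and> 3 \<le> card V \<and> V \<subseteq> verts G \<and> (\<forall>y\<in>V. bdR G x y)"
proof -
  obtain X where X: "X \<in> P" "faces G \<inter> faces X \<noteq> {}" "x \<in> \<Union>(circE G X)"
    using bd_circle[OF T GT cover x] by blast
  have XT: "X \<subseteq> T" using PT X(1) by blast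
  have mo: "meet_ok G X" using PM X(1) by blast
  note cf = circ_facts[OF T GT XT mo X(2)]
  have "\<forall>y\<in>\<Union>(circE G X). bdR G x y" using cf(2) X(3) by blast
  then show ?thesis using cf(3) cf(4) cf(5) by blast
qed

lemma Dlink:
  assumes T: "closed_surface T" and GT: "G \<subseteq> T" and DT: "D \<subseteq> T" and mo: "meet_ok G D"
    and y: "y \<in> verts G" "y \<in> verts D" and y': "y' \<in> verts G" "y' \<in> verts D"
  shows "bdR G y y'"
proof -
  have sing: "{z} \<in> faces K" if "z \<in> verts K" for z and K :: "'a set set"
    using that unfolding verts_def faces_def by blast
  have ne: "faces G \<inter> faces D \<noteq> {}" using sing[OF y(1)] sing[OF y(2)] by blast
  note cf = circ_facts[OF T GT DT mo ne]
  have "y \<in> \<Union>(circE G D)" by (rule cf(6)[OF sing[OF y(1)] sing[OF y(2)]])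
  moreover have "y' \<in> \<Union>(circE G D)" by (rule cf(6)[OF sing[OF y'(1)] sing[OF y'(2)]])
  ultimately show ?thesis using cf(2) by blast
qed

lemma final_count:
  assumes T: "closed_surface T" and c11: "card (verts T) \<le> 11"
    and A: "finite A" "3 \<le> card A" "A \<subseteq> verts T"
    and B: "finite B" "3 \<le> card B" "B \<subseteq> verts T"
    and AB: "A \<inter> B = {}" and AD: "A \<inter> verts D = {}" and BD: "B \<inter> verts D = {}"
    and Ds: "is_surface D" and DT: "D \<subseteq> T" and v: "v \<in> verts D" "v \<notin> bd_verts D"
    and mx: "\<forall>w\<in>verts T. valence T w \<le> valence T v"
  shows False
proof -
  have star: "\<forall>t\<in>T. v \<in> t \<longrightarrow> t \<in> D" by (rule star_in[OF T Ds DT v])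
  define N where "N = nbrs T v"
  have ND: "N \<subseteq> verts D"
  proof
    fix x assume "x \<in> N"
    then obtain t where t: "t \<in> T" "v \<in> t" "x \<in> t" unfolding N_def nbrs_def by blast
    then have "t \<in> D" using star by blast
    then show "x \<in> verts D" using t(3) unfolding verts_def by blast
  qed
  have vN: "v \<notin> N" unfolding N_def nbrs_def by blast
  have fN: "finite N" unfolding N_def by (rule finite_nbrs[OF T])
  define W where "W = insert v N"
  have cW: "card W = card N + 1" unfolding W_def using vN fN by simp
  have fW: "finite W" unfolding W_def using fN by simp
  have WD: "W \<subseteq> verts D" unfolding W_def using ND v(1) by blast
  have DTv: "verts D \<subseteq> verts T" using DT unfolding verts_def by blast
  have vT: "v \<in> verts T" using v(1) DTv by blast
  have AW: "A \<inter> W = {}" using AD WD by blast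
  have BW: "B \<inter> W = {}" using BD WD by blast
  have c1: "card (A \<union> B) = card A + card B" by (rule card_Un_disjoint[OF A(1) B(1) AB])
  have c2: "card ((A \<union> B) \<union> W) = card (A \<union> B) + card W"
    by (rule card_Un_disjoint) (use A(1) B(1) fW AW BW in auto)
  have subT: "(A \<union> B) \<union> W \<subseteq> verts T" using A(3) B(3) WD DTv by blast
  have "card ((A \<union> B) \<union> W) \<le> card (verts T)" by (rule card_mono[OF finite_verts[OF T] subT])
  then have big: "card A + card B + card N + 1 \<le> card (verts T)" using c1 c2 cW by simp
  then have N4: "card N \<le> 4" using A(2) B(2) c11 by simp
  have "\<forall>u\<in>verts T. card (nbrs T u) \<le> 4"
  proof
    fix u assume "u \<in> verts T"
    then have "valence T u \<le> valence T v" using mx by blast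
    then show "card (nbrs T u) \<le> 4" using vn[OF T, of u] vn[OF T, of v] N4 unfolding N_def by simp
  qed
  then have "card (verts T) \<le> 6" by (rule deg[OF T])
  moreover have "3 \<le> card N" unfolding N_def by (rule nbrs_ge3[OF T vT])
  ultimately show False using big A(2) B(2) by simp
qed



theorem mainTheorem8:
  fixes T G D :: "'a set set" and Ds :: "'a set set list"
  assumes "closed_surface T"
    and "card (verts T) \<le> 11"
    and "decomposition T G D Ds"
  shows "card (bd_components G) = 1 \<or> card (bd_components G) = 2"
proof -
  have T: "closed_surface T" using assms(1) .
  have Gs: "is_surface G" and GT: "G \<subseteq> T" and Dd: "is_disc D" and DT: "D \<subseteq> T"
    and vex: "\<exists>v\<in>verts D - bd_verts D. \<forall>w\<in>verts T. valence T w \<le> valence T v"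
    and cov: "G \<union> D \<union> \<Union>(set Ds) = T" and mGD: "meet_ok G D"
    and Dsd: "\<forall>X\<in>set Ds. is_disc X \<and> X \<subseteq> T" and mDs: "\<forall>X\<in>set Ds. meet_ok G X \<and> meet_ok D X"
    using assms(3) unfolding decomposition_def by blast+
  define P where "P = insert D (set Ds)"
  have cover: "T \<subseteq> G \<union> \<Union>P" using cov unfolding P_def by blast
  have PT: "\<forall>X\<in>P. X \<subseteq> T" using DT Dsd unfolding P_def by blast
  have PM: "\<forall>X\<in>P. meet_ok G X" using mGD mDs unfolding P_def by blast
  have DP: "D \<in> P" unfolding P_def by blast
  have Ds: "is_surface D" using Dd unfolding is_disc_def by blast
  define Rel where "Rel = {(a,b). bdR G a b}"
  have BC: "bd_components G = bd_verts G // Rel" unfolding bd_components_def Rel_def bdR_def by simp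
  have GTv: "verts G \<subseteq> verts T" using GT unfolding verts_def by blast
  have sing: "{z} \<in> faces K" if "z \<in> verts K" for z and K :: "'a set set"
    using that unfolding verts_def faces_def by blast
  have exm: "\<exists>X\<in>P. faces G \<inter> faces X \<noteq> {}"
  proof (rule ccontr)
    assume no: "\<not> (\<exists>X\<in>P. faces G \<inter> faces X \<noteq> {})"
    have G0: "G \<noteq> {}" using surf_facts(2)[OF Gs] .
    then obtain g where g: "g \<in> G" by blast
    have "card g = 3" using surf_facts(3)[OF Gs g] .
    then obtain a where a: "a \<in> g" by (metis card.empty ex_in_conv zero_neq_numeral)
    have aG: "a \<in> verts G" using a g unfolding verts_def by blast
    have cl: "\<forall>s\<in>verts G. nbrs T s \<subseteq> verts G"
    proof (intro ballI subsetI)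
      fix s x assume s: "s \<in> verts G" and x: "x \<in> nbrs T s"
      then obtain t where t: "t \<in> T" "s \<in> t" "x \<in> t" unfolding nbrs_def by blast
      show "x \<in> verts G"
      proof (cases "t \<in> G")
        case True then show ?thesis using t(3) unfolding verts_def by blast
      next
        case False
        then obtain X where X: "X \<in> P" "t \<in> X" using cover t(1) by blast
        have "s \<in> verts X" using X(2) t(2) unfolding verts_def by blast
        then have "{s} \<in> faces G \<inter> faces X" using sing[OF s] sing by blast
        then show ?thesis using no X(1) by blast
      qed
    qed
    have "verts T \<subseteq> verts G" by (rule vc[OF T aG]) (use aG GTv cl in blast)+
    moreover obtain d where d: "d \<in> D" using surf_facts(2)[OF Ds] by blast
    moreover have "card d = 3" using surf_facts(3)[OF Ds d] .
    then obtain y where y: "y \<in> d" by (metis card.empty ex_in_conv zero_neq_numeral)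
    have yD: "y \<in> verts D" using y d unfolding verts_def by blast
    then have "y \<in> verts T" using DT unfolding verts_def by blast
    ultimately have "y \<in> verts G" by blast
    then have "{y} \<in> faces G \<inter> faces D" using sing[OF yD] sing by blast
    then show False using no DP by blast
  qed
  then obtain X0 where X0: "X0 \<in> P" "faces G \<inter> faces X0 \<noteq> {}" by blast
  have X0T: "X0 \<subseteq> T" using PT X0(1) by blast
  have mo0: "meet_ok G X0" using PM X0(1) by blast
  note cf0 = circ_facts[OF T GT X0T mo0 X0(2)]
  have "\<Union>(circE G X0) \<noteq> {}" using cf0(3) by (metis card.empty not_numeral_le_zero)
  then obtain y0 where "y0 \<in> \<Union>(circE G X0)" by blast
  then have y0: "y0 \<in> bd_verts G" using cf0(1) unfolding bd_verts_def by blast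
  have fbv: "finite (bd_verts G)"
  proof (rule finite_subset[OF _ finite_verts[OF T]])
    show "bd_verts G \<subseteq> verts T" using GTv unfolding bd_verts_def bd_edges_def edges_def verts_def by blast
  qed
  have "bd_verts G // Rel \<subseteq> (\<lambda>x. Rel``{x}) ` bd_verts G" unfolding quotient_def by blast
  then have fQ: "finite (bd_components G)" unfolding BC using fbv finite_subset by blast
  have "Rel``{y0} \<in> bd_components G" unfolding BC using y0 by (rule quotientI)
  then have lo: "1 \<le> card (bd_components G)" using fQ by (metis One_nat_def Suc_leI card_gt_0_iff empty_iff)
  have up: "card (bd_components G) \<le> 2"
  proof (rule ccontr)
    assume "\<not> card (bd_components G) \<le> 2"
    then have c3': "3 \<le> card (bd_components G)" by simp
    obtain c1 c2 c3 where cs: "c1 \<in> bd_components G" "c2 \<in> bd_components G" "c3 \<in> bd_components G"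
      "c1 \<noteq> c2" "c1 \<noteq> c3" "c2 \<noteq> c3" using three_elems[OF c3'] by blast
    obtain x1 where x1: "c1 = Rel``{x1}" "x1 \<in> bd_verts G" using cs(1) unfolding BC by (rule quotientE)
    obtain x2 where x2: "c2 = Rel``{x2}" "x2 \<in> bd_verts G" using cs(2) unfolding BC by (rule quotientE)
    obtain x3 where x3: "c3 = Rel``{x3}" "x3 \<in> bd_verts G" using cs(3) unfolding BC by (rule quotientE)
    have n12: "\<not> bdR G x1 x2" using cls_eq[of G x1 x2] cs(4) x1(1) x2(1) unfolding Rel_def by blast
    have n13: "\<not> bdR G x1 x3" using cls_eq[of G x1 x3] cs(5) x1(1) x3(1) unfolding Rel_def by blast
    have n23: "\<not> bdR G x2 x3" using cls_eq[of G x2 x3] cs(6) x2(1) x3(1) unfolding Rel_def by blast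
    obtain V1 where V1: "finite V1" "3 \<le> card V1" "V1 \<subseteq> verts G" "\<forall>y\<in>V1. bdR G x1 y"
      using comp_set[OF T GT cover PT PM x1(2)] by blast
    obtain V2 where V2: "finite V2" "3 \<le> card V2" "V2 \<subseteq> verts G" "\<forall>y\<in>V2. bdR G x2 y"
      using comp_set[OF T GT cover PT PM x2(2)] by blast
    obtain V3 where V3: "finite V3" "3 \<le> card V3" "V3 \<subseteq> verts G" "\<forall>y\<in>V3. bdR G x3 y"
      using comp_set[OF T GT cover PT PM x3(2)] by blast
    have disj: "V \<inter> V' = {}" if p: "V \<subseteq> verts G" "\<forall>y\<in>V. bdR G x y" "V' \<subseteq> verts G" "\<forall>y\<in>V'. bdR G x' y"
      "\<not> bdR G x x'" for V V' x x'
    proof (rule ccontr)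
      assume "V \<inter> V' \<noteq> {}"
      then obtain y where "y \<in> V" "y \<in> V'" by blast
      then have h1: "bdR G x y" "bdR G x' y" using p by blast+
      have "bdR G x x'" by (rule bdR_trans[OF h1(1) bdR_sym[OF h1(2)]])
      then show False using p(5) by blast
    qed
    have dm: "False" if p: "V \<subseteq> verts G" "\<forall>y\<in>V. bdR G x y" "V' \<subseteq> verts G" "\<forall>y\<in>V'. bdR G x' y"
      "\<not> bdR G x x'" "V \<inter> verts D \<noteq> {}" "V' \<inter> verts D \<noteq> {}" for V V' x x'
    proof -
      obtain y where y: "y \<in> V" "y \<in> verts D" using p(6) by blast
      obtain y' where y': "y' \<in> V'" "y' \<in> verts D" using p(7) by blast
      have "bdR G y y'" by (rule Dlink[OF T GT DT mGD]) (use y y' p in blast)+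
      moreover have h2: "bdR G x y" "bdR G x' y'" using p y y' by blast+
      ultimately have "bdR G x x'" using bdR_trans[OF h2(1) bdR_trans[OF _ bdR_sym[OF h2(2)]]] by blast
      then show False using p(5) by blast
    qed
    have d12: "V1 \<inter> V2 = {}" by (rule disj[OF V1(3,4) V2(3,4) n12])
    have d13: "V1 \<inter> V3 = {}" by (rule disj[OF V1(3,4) V3(3,4) n13])
    have d23: "V2 \<inter> V3 = {}" by (rule disj[OF V2(3,4) V3(3,4) n23])
    obtain v where v: "v \<in> verts D" "v \<notin> bd_verts D" "\<forall>w\<in>verts T. valence T w \<le> valence T v"
      using vex by blast
    have fc: "False" if p: "finite A" "3 \<le> card A" "A \<subseteq> verts G" "finite B" "3 \<le> card B" "B \<subseteq> verts G"
      "A \<inter> B = {}" "A \<inter> verts D = {}" "B \<inter> verts D = {}" for A B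
      by (rule final_count[OF T assms(2), of A B D v]) (use p GTv Ds DT v in blast)+
    show False
    proof (cases "V1 \<inter> verts D = {}")
      case c1: True
      show False
      proof (cases "V2 \<inter> verts D = {}")
        case True then show False using fc[OF V1(1-3) V2(1-3) d12 c1] by blast
      next
        case False
        then have "V3 \<inter> verts D = {}" using dm[OF V2(3,4) V3(3,4) n23] by blast
        then show False using fc[OF V1(1-3) V3(1-3) d13 c1] by blast
      qed
    next
      case c1: False
      then have c2: "V2 \<inter> verts D = {}" using dm[OF V1(3,4) V2(3,4) n12] by blast
      have c3: "V3 \<inter> verts D = {}" using dm[OF V1(3,4) V3(3,4) n13] c1 by blast
      show False using fc[OF V2(1-3) V3(1-3) d23 c2 c3] by blast
    qed
  qed
  show ?thesis using lo up by linarith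
qed

end
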